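(* Let $K\ge1$ and let $f(z)=\sum_{n=0}^\infty a_nz^n+\sum_{n=1}^\infty\overline{b_n}\,\overline{z}^n$ be a $K$-quasiconformal harmonic mapping on $\mathbb{D}$. If there is a constant $M>0$ such that $\ell_f^{\ast}(\theta,1)\le M$ for all $\theta\in[0,2\pi]$, then $|a_n|+|b_n|\le KM$ for all $n\ge1$. In particular, if $K=1$ the estimate is sharp, with extremal function $f(z)=Mz$.
   Context: $\mathbb{D}$ is the open unit disk. A sense-preserving homeomorphism $f\in W^{1,2}_{loc}$ is $K$-quasiconformal if $(|f_z|+|f_{\bar z}|)^2\le K(|f_z|^2-|f_{\bar z}|^2)$. For a harmonic mapping $f$ in $\mathbb{D}$, $\theta\in[0,2\pi]$ and $r\in[0,1)$, $\ell_f^{\ast}(\theta,r)=\int_0^r\left|f_z(\rho e^{i\theta})+e^{-2i\theta}f_{\bar z}(\rho e^{i\theta})\right|d\rho$, and $\ell_f^{\ast}(\theta,1)=\sup_{0<r<1}\ell_f^{\ast}(\theta,r)$. *)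

theory Defs
  imports "HOL-Analysis.Analysis"
begin

definition wirt_z :: "(complex \<Rightarrow> complex) \<Rightarrow> complex \<Rightarrow> complex" where
  "wirt_z f z = (frechet_derivative f (at z) 1 - \<i> * frechet_derivative f (at z) \<i>) / 2"

definition wirt_zbar :: "(complex \<Rightarrow> complex) \<Rightarrow> complex \<Rightarrow> complex" where
  "wirt_zbar f z = (frechet_derivative f (at z) 1 + \<i> * frechet_derivative f (at z) \<i>) / 2"

definition harm_series :: "(nat \<Rightarrow> complex) \<Rightarrow> (nat \<Rightarrow> complex) \<Rightarrow> complex \<Rightarrow> complex" where
  "harm_series a b z = (\<Sum>n. a n * z ^ n) + (\<Sum>n. cnj (b (Suc n)) * cnj z ^ Suc n)"

definition harmonic_series_on_disk :: "(nat \<Rightarrow> complex) \<Rightarrow> (nat \<Rightarrow> complex) \<Rightarrow> bool" where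
  "harmonic_series_on_disk a b \<longleftrightarrow>
     (\<forall>z\<in>ball 0 1. summable (\<lambda>n. a n * z ^ n) \<and> summable (\<lambda>n. b n * z ^ n))"

text \<open>For smooth (harmonic) f the
  W^{1,2}_loc requirement is automatic; we require differentiability everywhere and
  sense-preserving means positive Jacobian |f_z|^2 - |f_zbar|^2 > 0.\<close>
definition K_quasiconformal_on :: "real \<Rightarrow> (complex \<Rightarrow> complex) \<Rightarrow> complex set \<Rightarrow> bool" where
  "K_quasiconformal_on K f S \<longleftrightarrow>
     (\<exists>g. homeomorphism S (f ` S) f g) \<and>
     (\<forall>z\<in>S. f differentiable (at z) \<and>
        (cmod (wirt_z f z))\<^sup>2 - (cmod (wirt_zbar f z))\<^sup>2 > 0 \<and>
        (cmod (wirt_z f z) + cmod (wirt_zbar f z))\<^sup>2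
          \<le> K * ((cmod (wirt_z f z))\<^sup>2 - (cmod (wirt_zbar f z))\<^sup>2))"

definition ell_star :: "(complex \<Rightarrow> complex) \<Rightarrow> real \<Rightarrow> real \<Rightarrow> real" where
  "ell_star f \<theta> r = integral {0..r}
     (\<lambda>\<rho>. cmod (wirt_z f (of_real \<rho> * cis \<theta>) + cis (-2 * \<theta>) * wirt_zbar f (of_real \<rho> * cis \<theta>)))"

definition ell_star1 :: "(complex \<Rightarrow> complex) \<Rightarrow> real \<Rightarrow> ereal" where
  "ell_star1 f \<theta> = (SUP r\<in>{0<..<1}. ereal (ell_star f \<theta> r))"

end

theory Submission imports Defs "HOL-Complex_Analysis.Complex_Analysis" begin



lemma ps_radius:
  fixes c :: "nat \<Rightarrow> complex"
  assumes "\<forall>z\<in>ball 0 1. summable (\<lambda>n. c n * z ^ n)"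
  shows "fps_conv_radius (Abs_fps c) \<ge> 1"
  unfolding fps_conv_radius_def
proof (rule conv_radius_geI_ex')
  fix r :: real assume "0 < r" "ereal r < 1"
  thus "summable (\<lambda>n. fps_nth (Abs_fps c) n * of_real r ^ n)"
    using assms by auto
qed

lemma ereal_lt_aux: "x < 1 \<Longrightarrow> 1 \<le> (R::ereal) \<Longrightarrow> ereal x < R"
  proof -
  assume "x < 1" "1 \<le> R"
  hence "ereal x < 1" by simp
  thus ?thesis using \<open>1 \<le> R\<close> by (rule less_le_trans)
qed

lemma ps_eval: "eval_fps (Abs_fps c) = (\<lambda>z. \<Sum>n. c n * z ^ n)"
  by (simp add: eval_fps_def fun_eq_iff)

lemma ps_holo:
  fixes c :: "nat \<Rightarrow> complex"
  assumes "\<forall>z\<in>ball 0 1. summable (\<lambda>n. c n * z ^ n)"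
  shows "(\<lambda>z. \<Sum>n. c n * z ^ n) holomorphic_on ball 0 1"
proof -
  have "ball 0 1 \<subseteq> eball 0 (fps_conv_radius (Abs_fps c))"
    using ps_radius[OF assms] by (auto intro!: ereal_lt_aux)
  from holomorphic_on_eval_fps[OF this] show ?thesis by (simp add: ps_eval)
qed

lemma coeff_bound:
  fixes c :: "nat \<Rightarrow> complex"
  assumes sm: "\<forall>z\<in>ball 0 1. summable (\<lambda>n. c n * z ^ n)"
    and bd: "\<And>z. z \<in> ball 0 1 \<Longrightarrow> norm ((\<Sum>n. c n * z ^ n) - c 0) \<le> B"
    and n: "n \<ge> 1"
  shows "norm (c n) \<le> B"
proof -
  define P where "P = (\<lambda>z. \<Sum>n. c n * z ^ n)"
  define F where "F = Abs_fps c - fps_const (c 0)"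
  have rad: "fps_conv_radius (Abs_fps c) \<ge> 1" using ps_radius[OF sm] .
  have radF: "fps_conv_radius F \<ge> 1"
  proof -
    have "fps_conv_radius F \<ge> min (fps_conv_radius (Abs_fps c)) (fps_conv_radius (fps_const (c 0)))"
      unfolding F_def by (rule fps_conv_radius_diff)
    thus ?thesis using rad by simp
  qed
  have evF: "eval_fps F z = P z - c 0" if "norm z < 1" for z
  proof -
    have "eval_fps F z = eval_fps (Abs_fps c) z - eval_fps (fps_const (c 0)) z"
      unfolding F_def using that rad radF
      by (intro eval_fps_diff) (auto intro!: ereal_lt_aux)
    thus ?thesis by (simp add: ps_eval P_def)
  qed
  have exp: "(\<lambda>z. P z - c 0) has_fps_expansion F"
    unfolding has_fps_expansion_def
  proof
    show "0 < fps_conv_radius F" using ereal_lt_aux[of 0, OF _ radF] by (simp add: zero_ereal_def)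
    have "eventually (\<lambda>z. z \<in> ball (0::complex) 1) (nhds 0)"
      by (intro eventually_nhds_in_open) auto
    thus "eventually (\<lambda>z. eval_fps F z = P z - c 0) (nhds 0)"
      by eventually_elim (auto simp: evF)
  qed
  have cn: "c n = (deriv ^^ n) (\<lambda>z. P z - c 0) 0 / fact n"
    using fps_nth_fps_expansion[OF exp, of n] n by (simp add: F_def)
  have holo: "(\<lambda>z. P z - c 0) holomorphic_on ball 0 1"
    unfolding P_def by (intro holomorphic_intros ps_holo[OF sm])
  have le: "norm (c n) * s ^ n \<le> B" if s: "0 < s" "s < 1" for s
  proof -
    have "norm ((deriv ^^ n) (\<lambda>z. P z - c 0) 0) \<le> fact n * B / s ^ n"
    proof (rule Cauchy_inequality)
      show "(\<lambda>z. P z - c 0) holomorphic_on ball 0 s"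
        using holo by (rule holomorphic_on_subset) (use s in auto)
      show "continuous_on (cball 0 s) (\<lambda>z. P z - c 0)"
        using holomorphic_on_imp_continuous_on[OF holo] by (rule continuous_on_subset) (use s in auto)
      show "0 < s" by fact
      fix x :: complex assume "norm (0 - x) = s"
      thus "norm (P x - c 0) \<le> B" using bd[of x] s by (auto simp: P_def)
    qed
    note ineq = this
    have e: "norm (c n) = norm ((deriv ^^ n) (\<lambda>z. P z - c 0) 0) / fact n"
      by (subst cn) (simp add: norm_divide)
    have "norm (c n) \<le> B / s ^ n"
      using divide_right_mono[OF ineq, of "fact n"] unfolding e by simp
    thus ?thesis using s by (simp add: pos_le_divide_eq)
  qed
  have lim: "((\<lambda>s. norm (c n) * s ^ n) \<longlongrightarrow> norm (c n) * 1 ^ n) (at_left (1::real))"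
    by (intro tendsto_intros)
  have ev: "eventually (\<lambda>s. norm (c n) * s ^ n \<le> B) (at_left (1::real))"
  proof -
    have "eventually (\<lambda>x. x \<in> {0<..<1}) (at_left (1::real))"
      by (rule eventually_at_left_real) simp
    thus ?thesis by eventually_elim (auto intro: le)
  qed
  show ?thesis using tendsto_upperbound[OF lim ev] by simp
qed



lemma radial_bound:
  fixes P P' Q :: "complex \<Rightarrow> complex"
  assumes der: "\<And>w. w \<in> ball 0 1 \<Longrightarrow> (P has_field_derivative P' w) (at w)"
    and contQ: "continuous_on (ball 0 1) Q"
    and bd: "\<And>w. w \<in> ball 0 1 \<Longrightarrow> cmod (P' w) \<le> c * cmod (Q w)"
    and r: "0 \<le> r" "r < 1"
  shows "cmod (P (of_real r * cis \<theta>) - P 0) \<le> c * integral {0..r} (\<lambda>\<rho>. cmod (Q (of_real \<rho> * cis \<theta>)))"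
proof -
  have inb: "of_real \<rho> * cis \<theta> \<in> ball 0 1" if "\<rho> \<in> {0..r}" for \<rho>
    using that r by (auto simp: norm_mult)
  have vd: "((\<lambda>\<rho>. P (of_real \<rho> * cis \<theta>)) has_vector_derivative (cis \<theta> * P' (of_real \<rho> * cis \<theta>))) (at \<rho> within {0..r})"
    if \<rho>: "\<rho> \<in> {0..r}" for \<rho>
  proof -
    have l: "((\<lambda>\<rho>. of_real \<rho> * cis \<theta>) has_vector_derivative cis \<theta>) (at \<rho> within {0..r})"
    proof -
      have "((\<lambda>z. z * cis \<theta>) has_field_derivative cis \<theta>) (at (of_real \<rho>))"
        by (auto intro!: derivative_eq_intros)
      from has_vector_derivative_real_field[OF this] show ?thesis .
    qed
    have "(P has_field_derivative P' (of_real \<rho> * cis \<theta>)) (at (of_real \<rho> * cis \<theta>) within (\<lambda>\<rho>. of_real \<rho> * cis \<theta>) ` {0..r})"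
      using der[OF inb[OF \<rho>]] by (rule has_field_derivative_at_within)
    from field_vector_diff_chain_within[OF l this] show ?thesis by (simp add: o_def)
  qed
  have hi: "((\<lambda>\<rho>. cis \<theta> * P' (of_real \<rho> * cis \<theta>)) has_integral (P (of_real r * cis \<theta>) - P 0)) {0..r}"
    using fundamental_theorem_of_calculus[OF r(1) vd] by simp
  have cQ: "continuous_on {0..r} (\<lambda>\<rho>. cmod (Q (of_real \<rho> * cis \<theta>)))"
  proof -
    have "continuous_on {0..r} (\<lambda>\<rho>. Q (of_real \<rho> * cis \<theta>))"
      by (rule continuous_on_compose2[OF contQ]) (use r in \<open>auto intro!: continuous_intros simp: norm_mult\<close>)
    thus ?thesis by (intro continuous_intros)
  qed
  have "norm (integral {0..r} (\<lambda>\<rho>. cis \<theta> * P' (of_real \<rho> * cis \<theta>)))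
        \<le> integral {0..r} (\<lambda>\<rho>. c * cmod (Q (of_real \<rho> * cis \<theta>)))"
  proof (rule integral_norm_bound_integral)
    show "(\<lambda>\<rho>. cis \<theta> * P' (of_real \<rho> * cis \<theta>)) integrable_on {0..r}"
      using hi by blast
    show "(\<lambda>\<rho>. c * cmod (Q (of_real \<rho> * cis \<theta>))) integrable_on {0..r}"
      by (intro integrable_continuous_interval continuous_intros cQ)
    fix x assume "x \<in> {0..r}"
    thus "norm (cis \<theta> * P' (of_real x * cis \<theta>)) \<le> c * cmod (Q (of_real x * cis \<theta>))"
      using bd[OF inb] by (simp add: norm_mult)
  qed
  thus ?thesis using integral_unique[OF hi] by simp
qed



lemma harm_eq:
  assumes hs: "harmonic_series_on_disk a b" and z: "z \<in> ball 0 1"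
  shows "harm_series a b z = (\<Sum>n. a n * z ^ n) + cnj ((\<Sum>n. b n * z ^ n) - b 0)"
proof -
  have sb: "summable (\<lambda>n. b n * z ^ n)" using hs z by (auto simp: harmonic_series_on_disk_def)
  have s1: "(\<lambda>n. b (Suc n) * z ^ Suc n) sums ((\<Sum>n. b n * z ^ n) - b 0)"
  proof -
    have "summable (\<lambda>n. b (Suc n) * z ^ Suc n)" using sb by (subst summable_Suc_iff)
    moreover have "(\<Sum>n. b (Suc n) * z ^ Suc n) = (\<Sum>n. b n * z ^ n) - b 0"
      using suminf_split_head[OF sb] by simp
    ultimately show ?thesis by (metis summable_sums)
  qed
  hence "(\<lambda>n. cnj (b (Suc n) * z ^ Suc n)) sums cnj ((\<Sum>n. b n * z ^ n) - b 0)"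
    by (subst sums_cnj)
  hence "(\<Sum>n. cnj (b (Suc n)) * cnj z ^ Suc n) = cnj ((\<Sum>n. b n * z ^ n) - b 0)"
    by (simp add: sums_iff)
  thus ?thesis by (simp add: harm_series_def)
qed

lemma harm_hasderiv:
  assumes hs: "harmonic_series_on_disk a b" and z: "z \<in> ball 0 1"
  shows "(harm_series a b has_derivative
           (\<lambda>w. deriv (\<lambda>z. \<Sum>n. a n * z ^ n) z * w + cnj (deriv (\<lambda>z. \<Sum>n. b n * z ^ n) z * w))) (at z)"
proof -
  define H where "H = (\<lambda>z. \<Sum>n. a n * z ^ n)"
  define G where "G = (\<lambda>z. \<Sum>n. b n * z ^ n)"
  have hH: "H holomorphic_on ball 0 1" unfolding H_def
    by (rule ps_holo) (use hs in \<open>auto simp: harmonic_series_on_disk_def\<close>)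
  have hG: "G holomorphic_on ball 0 1" unfolding G_def
    by (rule ps_holo) (use hs in \<open>auto simp: harmonic_series_on_disk_def\<close>)
  have dH: "(H has_derivative (\<lambda>w. deriv H z * w)) (at z)"
    using holomorphic_derivI[OF hH open_ball z, of UNIV] by (simp add: has_field_derivative_def)
  have dG: "((\<lambda>w. G w - b 0) has_derivative (\<lambda>w. deriv G z * w)) (at z)"
    using holomorphic_derivI[OF hG open_ball z, of UNIV]
    by (auto simp: has_field_derivative_def mult.commute intro!: derivative_eq_intros)
  have dcG: "((\<lambda>w. cnj (G w - b 0)) has_derivative (\<lambda>w. cnj (deriv G z * w))) (at z)"
    using bounded_linear.has_derivative[OF bounded_linear_cnj dG] .
  have "((\<lambda>w. H w + cnj (G w - b 0)) has_derivative (\<lambda>w. deriv H z * w + cnj (deriv G z * w))) (at z)"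
    by (rule has_derivative_add[OF dH dcG])
  hence "(harm_series a b has_derivative (\<lambda>w. deriv H z * w + cnj (deriv G z * w))) (at z)"
    by (rule has_derivative_transform_within_open[OF _ open_ball z])
       (simp add: harm_eq[OF hs] H_def G_def)
  thus ?thesis by (simp add: H_def G_def)
qed

lemma wirt_harm:
  assumes hs: "harmonic_series_on_disk a b" and z: "z \<in> ball 0 1"
  shows "wirt_z (harm_series a b) z = deriv (\<lambda>z. \<Sum>n. a n * z ^ n) z"
    and "wirt_zbar (harm_series a b) z = cnj (deriv (\<lambda>z. \<Sum>n. b n * z ^ n) z)"
proof -
  have e: "frechet_derivative (harm_series a b) (at z) =
     (\<lambda>w. deriv (\<lambda>z. \<Sum>n. a n * z ^ n) z * w + cnj (deriv (\<lambda>z. \<Sum>n. b n * z ^ n) z * w))"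
    using frechet_derivative_at[OF harm_hasderiv[OF hs z]] by simp
  show "wirt_z (harm_series a b) z = deriv (\<lambda>z. \<Sum>n. a n * z ^ n) z"
    unfolding wirt_z_def e by (simp add: algebra_simps)
  show "wirt_zbar (harm_series a b) z = cnj (deriv (\<lambda>z. \<Sum>n. b n * z ^ n) z)"
    unfolding wirt_zbar_def e by (simp add: algebra_simps)
qed



lemma arith_qc:
  fixes x y K :: real
  assumes "x \<ge> 0" "y \<ge> 0" "x\<^sup>2 - y\<^sup>2 > 0" "(x + y)\<^sup>2 \<le> K * (x\<^sup>2 - y\<^sup>2)"
  shows "2 * x \<le> (K + 1) * (x - y) \<and> 2 * y \<le> (K - 1) * (x - y)"
proof -
  have xy: "x + y > 0"
  proof (rule ccontr)
    assume "\<not> x + y > 0" hence "x = 0" "y = 0" using assms by auto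
    thus False using assms by simp
  qed
  have "(x + y) * (x + y) \<le> (K * (x - y)) * (x + y)"
    using assms(4) by (simp add: power2_eq_square algebra_simps)
  hence "x + y \<le> K * (x - y)" using xy by (simp add: mult_le_cancel_right_pos)
  thus ?thesis by (simp add: algebra_simps)
qed

lemma polar_form:
  assumes "z \<in> ball (0::complex) 1"
  shows "\<exists>\<theta>\<in>{0..2*pi}. z = of_real (cmod z) * cis \<theta>"
proof -
  have z: "z = of_real (cmod z) * cis (Arg z)" using rcis_cmod_Arg[of z] by (simp add: rcis_def)
  show ?thesis
  proof (cases "Arg z \<ge> 0")
    case True
    thus ?thesis using Arg_bounded[of z] z by (intro bexI[of _ "Arg z"]) auto
  next
    case False
    have "cis (Arg z + 2 * pi) = cis (Arg z)" by (simp add: cis_mult[symmetric])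
    thus ?thesis using Arg_bounded[of z] z False
      by (intro bexI[of _ "Arg z + 2 * pi"]) auto
  qed
qed

lemma part1:
  fixes K M :: real and a b :: "nat \<Rightarrow> complex"
  assumes K: "K \<ge> 1" and M: "M > 0" and hs: "harmonic_series_on_disk a b"
    and qc: "K_quasiconformal_on K (harm_series a b) (ball 0 1)"
    and ell: "\<forall>\<theta>\<in>{0..2*pi}. ell_star1 (harm_series a b) \<theta> \<le> ereal M"
    and n: "n \<ge> 1"
  shows "cmod (a n) + cmod (b n) \<le> K * M"
proof -
  define f where "f = harm_series a b"
  define H where "H = (\<lambda>z. \<Sum>n. a n * z ^ n)"
  define G where "G = (\<lambda>z. \<Sum>n. b n * z ^ n)"
  have sa: "\<forall>z\<in>ball 0 1. summable (\<lambda>n. a n * z ^ n)" and sb: "\<forall>z\<in>ball 0 1. summable (\<lambda>n. b n * z ^ n)"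
    using hs by (auto simp: harmonic_series_on_disk_def)
  have hH: "H holomorphic_on ball 0 1" unfolding H_def by (rule ps_holo[OF sa])
  have hG: "G holomorphic_on ball 0 1" unfolding G_def by (rule ps_holo[OF sb])
  have wz: "wirt_z f w = deriv H w" and wzb: "wirt_zbar f w = cnj (deriv G w)" if "w \<in> ball 0 1" for w
    using wirt_harm[OF hs that] by (simp_all add: f_def H_def G_def)
  have ineq: "2 * cmod (deriv H w) \<le> (K + 1) * (cmod (deriv H w) - cmod (deriv G w)) \<and>
              2 * cmod (deriv G w) \<le> (K - 1) * (cmod (deriv H w) - cmod (deriv G w))"
    if w: "w \<in> ball 0 1" for w
  proof -
    have "(cmod (wirt_z f w))\<^sup>2 - (cmod (wirt_zbar f w))\<^sup>2 > 0 \<and>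
          (cmod (wirt_z f w) + cmod (wirt_zbar f w))\<^sup>2
          \<le> K * ((cmod (wirt_z f w))\<^sup>2 - (cmod (wirt_zbar f w))\<^sup>2)"
      using qc w unfolding K_quasiconformal_on_def f_def by blast
    hence "(cmod (deriv H w))\<^sup>2 - (cmod (deriv G w))\<^sup>2 > 0 \<and>
          (cmod (deriv H w) + cmod (deriv G w))\<^sup>2
          \<le> K * ((cmod (deriv H w))\<^sup>2 - (cmod (deriv G w))\<^sup>2)"
      using wz[OF w] wzb[OF w] by simp
    thus ?thesis by (intro arith_qc) auto
  qed
  define Q where "Q = (\<lambda>\<theta> w. deriv H w + cis (-2 * \<theta>) * cnj (deriv G w))"
  have Qlow: "cmod (deriv H w) - cmod (deriv G w) \<le> cmod (Q \<theta> w)" for \<theta> w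
    using norm_diff_ineq[of "deriv H w" "cis (-2 * \<theta>) * cnj (deriv G w)"]
    by (simp add: Q_def norm_mult)
  have bdH: "cmod (deriv H w) \<le> (K + 1) / 2 * cmod (Q \<theta> w)" if "w \<in> ball 0 1" for \<theta> w
  proof -
    have "(K + 1) * (cmod (deriv H w) - cmod (deriv G w)) \<le> (K + 1) * cmod (Q \<theta> w)"
      by (rule mult_left_mono[OF Qlow]) (use K in simp)
    thus ?thesis using ineq[OF that] by simp
  qed
  have bdG: "cmod (deriv G w) \<le> (K - 1) / 2 * cmod (Q \<theta> w)" if "w \<in> ball 0 1" for \<theta> w
  proof -
    have "(K - 1) * (cmod (deriv H w) - cmod (deriv G w)) \<le> (K - 1) * cmod (Q \<theta> w)"
      by (rule mult_left_mono[OF Qlow]) (use K in simp)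
    thus ?thesis using ineq[OF that] by simp
  qed
  have contQ: "continuous_on (ball 0 1) (Q \<theta>)" for \<theta>
  proof -
    have "continuous_on (ball 0 1) (deriv H)"
      by (rule holomorphic_on_imp_continuous_on[OF holomorphic_deriv[OF hH open_ball]])
    moreover have "continuous_on (ball 0 1) (deriv G)"
      by (rule holomorphic_on_imp_continuous_on[OF holomorphic_deriv[OF hG open_ball]])
    ultimately show ?thesis unfolding Q_def by (intro continuous_intros)
  qed
  have ellb: "integral {0..r} (\<lambda>\<rho>. cmod (Q \<theta> (of_real \<rho> * cis \<theta>))) \<le> M"
    if th: "\<theta> \<in> {0..2*pi}" and r: "0 \<le> r" "r < 1" for \<theta> r
  proof -
    have "integral {0..r} (\<lambda>\<rho>. cmod (Q \<theta> (of_real \<rho> * cis \<theta>))) = ell_star f \<theta> r"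
      unfolding ell_star_def
    proof (rule integral_cong)
      fix \<rho> assume "\<rho> \<in> {0..r}"
      hence "of_real \<rho> * cis \<theta> \<in> ball 0 1" using r by (auto simp: norm_mult)
      thus "cmod (Q \<theta> (of_real \<rho> * cis \<theta>)) =
        cmod (wirt_z f (of_real \<rho> * cis \<theta>) + cis (- 2 * \<theta>) * wirt_zbar f (of_real \<rho> * cis \<theta>))"
        by (simp add: wz wzb Q_def)
    qed
    also have "\<dots> \<le> M"
    proof (cases "r = 0")
      case True thus ?thesis using M by (simp add: ell_star_def)
    next
      case False
      hence "r \<in> {0<..<1}" using r by auto
      hence "ereal (ell_star f \<theta> r) \<le> ell_star1 f \<theta>"
        unfolding ell_star1_def by (rule SUP_upper)
      also have "\<dots> \<le> ereal M" using ell th by (simp add: f_def)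
      finally show ?thesis by simp
    qed
    finally show ?thesis .
  qed
  have H0: "H 0 = a 0" and G0: "G 0 = b 0" by (simp_all add: H_def G_def)
  have boundGen: "cmod (P z - P 0) \<le> c * M"
    if z: "z \<in> ball 0 1" and c: "c \<ge> 0" and P: "P holomorphic_on ball 0 1"
       and bd: "\<And>\<theta> w. w \<in> ball 0 1 \<Longrightarrow> cmod (deriv P w) \<le> c * cmod (Q \<theta> w)" for z c P
  proof -
    obtain \<theta> where th: "\<theta> \<in> {0..2*pi}" and zp: "z = of_real (cmod z) * cis \<theta>"
      using polar_form[OF z] by blast
    have "cmod (P (of_real (cmod z) * cis \<theta>) - P 0)
          \<le> c * integral {0..cmod z} (\<lambda>\<rho>. cmod (Q \<theta> (of_real \<rho> * cis \<theta>)))"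
    proof (rule radial_bound)
      show "(P has_field_derivative deriv P w) (at w)" if "w \<in> ball 0 1" for w
        by (rule holomorphic_derivI[OF P open_ball that])
      show "continuous_on (ball 0 1) (Q \<theta>)" by (rule contQ)
      show "cmod (deriv P w) \<le> c * cmod (Q \<theta> w)" if "w \<in> ball 0 1" for w by (rule bd[OF that])
      show "0 \<le> cmod z" by simp
      show "cmod z < 1" using z by simp
    qed
    also have "\<dots> \<le> c * M"
      using ellb[OF th, of "cmod z"] z c by (intro mult_left_mono) auto
    finally show ?thesis using zp by simp
  qed
  have "cmod (a n) \<le> (K + 1) / 2 * M"
  proof (rule coeff_bound[OF sa _ n])
    fix z :: complex assume z: "z \<in> ball 0 1"
    show "cmod ((\<Sum>n. a n * z ^ n) - a 0) \<le> (K + 1) / 2 * M"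
      using boundGen[OF z _ hH bdH] K by (simp add: H_def)
  qed
  moreover have "cmod (b n) \<le> (K - 1) / 2 * M"
  proof (rule coeff_bound[OF sb _ n])
    fix z :: complex assume z: "z \<in> ball 0 1"
    show "cmod ((\<Sum>n. b n * z ^ n) - b 0) \<le> (K - 1) / 2 * M"
      using boundGen[OF z _ hG bdG] K by (simp add: G_def)
  qed
  ultimately show ?thesis by (simp add: field_simps)
qed



lemma part2:
  fixes M :: real
  assumes M: "M > 0"
  shows "(let a = (\<lambda>n::nat. if n = 1 then complex_of_real M else 0);
                 b = (\<lambda>n::nat. 0::complex) in
              harmonic_series_on_disk a b \<and>
              (\<forall>z. harm_series a b z = complex_of_real M * z) \<and>
              K_quasiconformal_on 1 (harm_series a b) (ball 0 1) \<and>
              (\<forall>\<theta>\<in>{0..2*pi}. ell_star1 (harm_series a b) \<theta> \<le> ereal M) \<and>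
              cmod (a 1) + cmod (b 1) = 1 * M)"
proof -
  define a where "a = (\<lambda>n::nat. if n = 1 then complex_of_real M else 0)"
  define b where "b = (\<lambda>n::nat. 0::complex)"
  have as: "(\<lambda>n. a n * z ^ n) sums (complex_of_real M * z)" for z
  proof -
    have "(\<lambda>n. a n * z ^ n) = (\<lambda>n. if n = 1 then complex_of_real M * z ^ n else 0)"
      by (auto simp: a_def fun_eq_iff)
    thus ?thesis using sums_single[of 1 "\<lambda>n. complex_of_real M * z ^ n"] by simp
  qed
  have hs: "harmonic_series_on_disk a b"
    unfolding harmonic_series_on_disk_def using as by (auto simp: b_def intro: sums_summable)
  have feq: "harm_series a b = (\<lambda>z. complex_of_real M * z)"
    using as by (auto simp: harm_series_def b_def sums_iff fun_eq_iff)
  have hd: "((\<lambda>z. complex_of_real M * z) has_derivative (\<lambda>w. complex_of_real M * w)) (at z)" for z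
    by (auto intro!: derivative_eq_intros)
  have fd: "frechet_derivative (\<lambda>z. complex_of_real M * z) (at z) = (\<lambda>w. complex_of_real M * w)" for z
    using frechet_derivative_at[OF hd] by simp
  have wz: "wirt_z (harm_series a b) z = complex_of_real M" for z
    unfolding feq wirt_z_def fd by (simp add: algebra_simps)
  have wzb: "wirt_zbar (harm_series a b) z = 0" for z
    unfolding feq wirt_zbar_def fd by (simp add: algebra_simps)
  have qc: "K_quasiconformal_on 1 (harm_series a b) (ball 0 1)"
    unfolding K_quasiconformal_on_def
  proof (intro conjI ballI)
    show "\<exists>g. homeomorphism (ball 0 1) (harm_series a b ` ball 0 1) (harm_series a b) g"
    proof (intro exI homeomorphismI)
      show "continuous_on (ball 0 1) (harm_series a b)" unfolding feq by (intro continuous_intros)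
      show "continuous_on (harm_series a b ` ball 0 1) (\<lambda>w. w / complex_of_real M)"
        by (intro continuous_intros) (use M in auto)
      show "harm_series a b ` ball 0 1 \<subseteq> harm_series a b ` ball 0 1" by simp
      show "(\<lambda>w. w / complex_of_real M) ` harm_series a b ` ball 0 1 \<subseteq> ball 0 1"
        using M by (auto simp: feq)
      show "harm_series a b x / complex_of_real M = x" if "x \<in> ball 0 1" for x
        using M by (simp add: feq)
      show "harm_series a b (y / complex_of_real M) = y" if "y \<in> harm_series a b ` ball 0 1" for y
        using M by (simp add: feq)
    qed
    fix z :: complex
    show "harm_series a b differentiable at z" unfolding feq differentiable_def using hd by blast
    show "0 < (cmod (wirt_z (harm_series a b) z))\<^sup>2 - (cmod (wirt_zbar (harm_series a b) z))\<^sup>2"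
      using M by (simp add: wz wzb)
    show "(cmod (wirt_z (harm_series a b) z) + cmod (wirt_zbar (harm_series a b) z))\<^sup>2
          \<le> 1 * ((cmod (wirt_z (harm_series a b) z))\<^sup>2 - (cmod (wirt_zbar (harm_series a b) z))\<^sup>2)"
      by (simp add: wz wzb)
  qed
  have ell: "ell_star1 (harm_series a b) \<theta> \<le> ereal M" for \<theta>
    unfolding ell_star1_def
  proof (rule SUP_least)
    fix r :: real assume r: "r \<in> {0<..<1}"
    have "ell_star (harm_series a b) \<theta> r = r * M"
      using r M by (simp add: ell_star_def wz wzb)
    thus "ereal (ell_star (harm_series a b) \<theta> r) \<le> ereal M"
      using r M by (simp add: mult_le_cancel_right1)
  qed
  show ?thesis
    unfolding Let_def a_def[symmetric] b_def[symmetric]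
    using hs feq qc ell M by (simp add: a_def b_def)
qed

theorem theorem4:
  shows "(\<forall>(K::real) (M::real) (a::nat \<Rightarrow> complex) (b::nat \<Rightarrow> complex).
            K \<ge> 1 \<longrightarrow> M > 0 \<longrightarrow> harmonic_series_on_disk a b \<longrightarrow>
            K_quasiconformal_on K (harm_series a b) (ball 0 1) \<longrightarrow>
            (\<forall>\<theta>\<in>{0..2*pi}. ell_star1 (harm_series a b) \<theta> \<le> ereal M) \<longrightarrow>
            (\<forall>n\<ge>1. cmod (a n) + cmod (b n) \<le> K * M))
       \<and> (\<forall>M::real. M > 0 \<longrightarrow>
            (let a = (\<lambda>n::nat. if n = 1 then complex_of_real M else 0);
                 b = (\<lambda>n::nat. 0::complex) in
              harmonic_series_on_disk a b \<and>
              (\<forall>z. harm_series a b z = complex_of_real M * z) \<and>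
              K_quasiconformal_on 1 (harm_series a b) (ball 0 1) \<and>
              (\<forall>\<theta>\<in>{0..2*pi}. ell_star1 (harm_series a b) \<theta> \<le> ereal M) \<and>
              cmod (a 1) + cmod (b 1) = 1 * M))"
  proof (intro conjI allI impI)
  fix K M :: real and a b :: "nat \<Rightarrow> complex" and n :: nat
  assume "K \<ge> 1" "M > 0" "harmonic_series_on_disk a b"
    "K_quasiconformal_on K (harm_series a b) (ball 0 1)"
    "\<forall>\<theta>\<in>{0..2*pi}. ell_star1 (harm_series a b) \<theta> \<le> ereal M" "n \<ge> 1"
  thus "cmod (a n) + cmod (b n) \<le> K * M" by (rule part1)
next
  fix M :: real assume "M > 0"
  thus "let a = (\<lambda>n::nat. if n = 1 then complex_of_real M else 0);
                 b = (\<lambda>n::nat. 0::complex) in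
              harmonic_series_on_disk a b \<and>
              (\<forall>z. harm_series a b z = complex_of_real M * z) \<and>
              K_quasiconformal_on 1 (harm_series a b) (ball 0 1) \<and>
              (\<forall>\<theta>\<in>{0..2*pi}. ell_star1 (harm_series a b) \<theta> \<le> ereal M) \<and>
              cmod (a 1) + cmod (b 1) = 1 * M" by (rule part2)
qed

end
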